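(* Let $S=(s_{jl})\in\mathbb{C}^{4\times4}$ be Hermitian and $\varepsilon\in\{1,-1\}$. The multiset of roots (counted with multiplicity) of the quadratic polynomial $d\mapsto d^2+2p(\theta_1,\theta_2)\,d+q(\theta_1,\theta_2)$ is independent of $(\theta_1,\theta_2)\in(-\pi,\pi]^2$ if and only if $s_{12}=s_{34}=0$ and at most one of the four numbers $s_{13},s_{14},s_{23},s_{24}$ is nonzero.
   Context: Let $S=(s_{jl})_{j,l=1}^4$ be a Hermitian $4\times4$ complex matrix (so $s_{jj}\in\mathbb{R}$ and $s_{lj}=\overline{s_{jl}}$) and $\varepsilon\in\{1,-1\}$. For $\theta_1,\theta_2\in\mathbb{R}$ define $$p=-\tfrac12\Big[s_{11}+s_{22}+s_{33}+s_{44}+2\varepsilon\operatorname{Re}(s_{12}\mathrm{e}^{i\theta_1})+2\varepsilon\operatorname{Re}(s_{34}\mathrm{e}^{i\theta_2})\Big],$$ $$\begin{aligned}q={}&-\big(|s_{13}|^2-s_{11}s_{33}+|s_{14}|^2-s_{11}s_{44}+|s_{23}|^2-s_{22}s_{33}+|s_{24}|^2-s_{22}s_{44}\big)\\&-2\varepsilon\Big[-(s_{33}+s_{44})\operatorname{Re}(s_{12}\mathrm{e}^{i\theta_1})+\operatorname{Re}\big((s_{13}\overline{s_{23}}+s_{14}\overline{s_{24}})\mathrm{e}^{i\theta_1}\big)\\&\qquad-(s_{11}+s_{22})\operatorname{Re}(s_{34}\mathrm{e}^{i\theta_2})+\operatorname{Re}\big((\overline{s_{13}}s_{14}+\overline{s_{23}}s_{24})\mathrm{e}^{i\theta_2}\big)\Big]\\&-2\operatorname{Re}\big((s_{14}\overline{s_{23}}-s_{12}s_{34})\mathrm{e}^{i(\theta_1+\theta_2)}\big)-2\operatorname{Re}\big((s_{13}\overline{s_{24}}-s_{12}\overline{s_{34}})\mathrm{e}^{i(\theta_1-\theta_2)}\big).\end{aligned}$$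 *)

theory Defs
  imports Complex_Main "HOL-Computational_Algebra.Polynomial" "HOL-Library.Multiset"
begin

text \<open>A 4x4 complex matrix is represented by its entries s j l for j, l in {1..4}.\<close>

definition hermitian4 :: "(nat \<Rightarrow> nat \<Rightarrow> complex) \<Rightarrow> bool" where
  "hermitian4 s \<longleftrightarrow> (\<forall>j\<in>{1..4}. \<forall>l\<in>{1..4}. s l j = cnj (s j l))"

definition pfun :: "(nat \<Rightarrow> nat \<Rightarrow> complex) \<Rightarrow> real \<Rightarrow> real \<Rightarrow> real \<Rightarrow> real" where
  "pfun s \<epsilon> \<theta>1 \<theta>2 = - (1/2) * (Re (s 1 1) + Re (s 2 2) + Re (s 3 3) + Re (s 4 4)
     + 2 * \<epsilon> * Re (s 1 2 * exp (\<i> * of_real \<theta>1))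
     + 2 * \<epsilon> * Re (s 3 4 * exp (\<i> * of_real \<theta>2)))"

definition qfun :: "(nat \<Rightarrow> nat \<Rightarrow> complex) \<Rightarrow> real \<Rightarrow> real \<Rightarrow> real \<Rightarrow> real" where
  "qfun s \<epsilon> \<theta>1 \<theta>2 =
     - ((cmod (s 1 3))\<^sup>2 - Re (s 1 1) * Re (s 3 3) + (cmod (s 1 4))\<^sup>2 - Re (s 1 1) * Re (s 4 4)
        + (cmod (s 2 3))\<^sup>2 - Re (s 2 2) * Re (s 3 3) + (cmod (s 2 4))\<^sup>2 - Re (s 2 2) * Re (s 4 4))
     - 2 * \<epsilon> * ( - (Re (s 3 3) + Re (s 4 4)) * Re (s 1 2 * exp (\<i> * of_real \<theta>1))
         + Re ((s 1 3 * cnj (s 2 3) + s 1 4 * cnj (s 2 4)) * exp (\<i> * of_real \<theta>1))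
         - (Re (s 1 1) + Re (s 2 2)) * Re (s 3 4 * exp (\<i> * of_real \<theta>2))
         + Re ((cnj (s 1 3) * s 1 4 + cnj (s 2 3) * s 2 4) * exp (\<i> * of_real \<theta>2)))
     - 2 * Re ((s 1 4 * cnj (s 2 3) - s 1 2 * s 3 4) * exp (\<i> * of_real (\<theta>1 + \<theta>2)))
     - 2 * Re ((s 1 3 * cnj (s 2 4) - s 1 2 * cnj (s 3 4)) * exp (\<i> * of_real (\<theta>1 - \<theta>2)))"

definition quad_poly :: "(nat \<Rightarrow> nat \<Rightarrow> complex) \<Rightarrow> real \<Rightarrow> real \<Rightarrow> real \<Rightarrow> complex poly" where
  "quad_poly s \<epsilon> \<theta>1 \<theta>2 =
     [: complex_of_real (qfun s \<epsilon> \<theta>1 \<theta>2), 2 * complex_of_real (pfun s \<epsilon> \<theta>1 \<theta>2), 1 :]"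

text \<open>Multiset of (complex) roots of a nonzero polynomial, counted with multiplicity.\<close>
definition root_mset :: "complex poly \<Rightarrow> complex multiset" where
  "root_mset P = Abs_multiset (\<lambda>z. order z P)"

end

theory Submission
  imports Defs "HOL-Computational_Algebra.Fundamental_Theorem_Algebra"
begin

lemma reexp: "Re (z * exp (\<i> * complex_of_real t)) = Re z * cos t - Im z * sin t"
  by (simp add: cis_conv_exp[symmetric] )

lemma fourier:
  fixes a b c d :: complex
  assumes h: "\<And>x y. x \<in> {-pi<..pi} \<Longrightarrow> y \<in> {-pi<..pi} \<Longrightarrow>
     Re (a * exp (\<i> * of_real x)) + Re (b * exp (\<i> * of_real y)) + Re (c * exp (\<i> * of_real (x+y)))
     + Re (d * exp (\<i> * of_real (x-y))) = Re a + Re b + Re c + Re d"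
  shows "a = 0 \<and> b = 0 \<and> c = 0 \<and> d = 0"
proof -
  have h': "Re a * cos x - Im a * sin x + (Re b * cos y - Im b * sin y)
     + (Re c * (cos x * cos y - sin x * sin y) - Im c * (sin x * cos y + cos x * sin y))
     + (Re d * (cos x * cos y + sin x * sin y) - Im d * (sin x * cos y - cos x * sin y))
     = Re a + Re b + Re c + Re d" if "x \<in> {-pi<..pi}" "y \<in> {-pi<..pi}" for x y
    using h[OF that] unfolding reexp by (simp add: cos_add sin_add cos_diff sin_diff)
  have m: "0 \<in> {-pi<..pi}" "pi \<in> {-pi<..pi}" "pi/2 \<in> {-pi<..pi}" "-(pi/2) \<in> {-pi<..pi}"
    using pi_gt_zero by (auto simp: greaterThanAtMost_iff; linarith)+
  note H = h'[OF m(1) m(2)] h'[OF m(2) m(1)] h'[OF m(2) m(2)]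
     h'[OF m(1) m(3)] h'[OF m(1) m(4)] h'[OF m(3) m(1)] h'[OF m(4) m(1)]
     h'[OF m(3) m(3)] h'[OF m(3) m(4)] h'[OF m(4) m(3)] h'[OF m(4) m(4)]
     h'[OF m(2) m(3)] h'[OF m(3) m(2)]
  have "Re a = 0" "Im a = 0" "Re b = 0" "Im b = 0" "Re c = 0" "Im c = 0" "Re d = 0" "Im d = 0"
    using H by simp_all
  thus ?thesis by (simp add: complex_eq_iff)
qed

lemma cancel2: "(K::real) - 2*u = K - 2*v \<Longrightarrow> u = v" by simp

lemma rm_count: "P \<noteq> 0 \<Longrightarrow> count (root_mset P) z = order z P"
proof -
  assume P: "P \<noteq> 0"
  have "{x. 0 < order x P} \<subseteq> {x. poly P x = 0}" using P order_root by auto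
  hence "finite {x. 0 < order x P}" using poly_roots_finite[OF P] finite_subset by blast
  thus ?thesis unfolding root_mset_def by (simp add: count_Abs_multiset)
qed

lemma quad_inj:
  fixes a b a' b' :: complex
  assumes "root_mset [:a,b,1:] = root_mset [:a',b',1:]"
  shows "a = a' \<and> b = b'"
proof -
  define P where "P = [:a,b,1:]"
  define Q where "Q = [:a',b',1:]"
  have P0: "P \<noteq> 0" "Q \<noteq> 0" unfolding P_def Q_def by auto
  have ord: "order z P = order z Q" for z
    using assms rm_count[OF P0(1), of z] rm_count[OF P0(2), of z] unfolding P_def Q_def by simp
  have rs: "{z. poly P z = 0} = {z. poly Q z = 0}" using ord P0 by (auto simp: order_root)
  have lc: "lead_coeff P = 1" "lead_coeff Q = 1" unfolding P_def Q_def by simp_all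
  have "P = Q"
    using complex_poly_decompose[of P] complex_poly_decompose[of Q] ord rs lc by simp
  thus ?thesis unfolding P_def Q_def by simp
qed

theorem mainTheorem13:
  fixes s :: "nat \<Rightarrow> nat \<Rightarrow> complex" and \<epsilon> :: real
  assumes "hermitian4 s" and "\<epsilon> \<in> {1, -1}"
  shows "(\<forall>\<theta>1 \<theta>2 \<phi>1 \<phi>2.
            \<theta>1 \<in> {-pi<..pi} \<and> \<theta>2 \<in> {-pi<..pi} \<and> \<phi>1 \<in> {-pi<..pi} \<and> \<phi>2 \<in> {-pi<..pi} \<longrightarrow>
            root_mset (quad_poly s \<epsilon> \<theta>1 \<theta>2) = root_mset (quad_poly s \<epsilon> \<phi>1 \<phi>2))
     \<longleftrightarrow> (s 1 2 = 0 \<and> s 3 4 = 0 \<and>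
          card {z \<in> {(1::nat,3::nat), (1,4), (2,3), (2,4)}. s (fst z) (snd z) \<noteq> 0} \<le> 1)"
proof -
  define E where "E = (\<lambda>t::real. exp (\<i> * complex_of_real t))"
  define R where "R = Re (s 1 1) + Re (s 2 2) + Re (s 3 3) + Re (s 4 4)"
  define K where "K = - ((cmod (s 1 3))\<^sup>2 - Re (s 1 1) * Re (s 3 3) + (cmod (s 1 4))\<^sup>2 - Re (s 1 1) * Re (s 4 4)
        + (cmod (s 2 3))\<^sup>2 - Re (s 2 2) * Re (s 3 3) + (cmod (s 2 4))\<^sup>2 - Re (s 2 2) * Re (s 4 4))"
  define A where "A = s 1 3 * cnj (s 2 3) + s 1 4 * cnj (s 2 4)"
  define B where "B = cnj (s 1 3) * s 1 4 + cnj (s 2 3) * s 2 4"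
  define C where "C = s 1 4 * cnj (s 2 3)"
  define D where "D = s 1 3 * cnj (s 2 4)"
  have eps0: "\<epsilon> \<noteq> 0" using assms(2) by auto
  have E0: "E 0 = 1" unfolding E_def by simp
  have pf: "pfun s \<epsilon> x y = -(1/2) * R - (Re (of_real \<epsilon> * s 1 2 * E x) + Re (of_real \<epsilon> * s 3 4 * E y)
     + Re (0 * E (x+y)) + Re (0 * E (x - y)))" for x y
    unfolding pfun_def R_def E_def by (simp add: algebra_simps)
  have qf: "qfun s \<epsilon> x y = K - 2 * (Re (of_real \<epsilon> * A * E x) + Re (of_real \<epsilon> * B * E y)
     + Re (C * E (x+y)) + Re (D * E (x - y)))" if "s 1 2 = 0" "s 3 4 = 0" for x y
    unfolding qfun_def K_def A_def B_def C_def D_def E_def using that by (simp add: algebra_simps)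
  have card_iff: "card {z \<in> {(1::nat,3::nat), (1,4), (2,3), (2,4)}. s (fst z) (snd z) \<noteq> 0} \<le> 1 \<longleftrightarrow>
     (s 1 3 = 0 \<or> s 1 4 = 0) \<and> (s 1 3 = 0 \<or> s 2 3 = 0) \<and> (s 1 3 = 0 \<or> s 2 4 = 0) \<and>
     (s 1 4 = 0 \<or> s 2 3 = 0) \<and> (s 1 4 = 0 \<or> s 2 4 = 0) \<and> (s 2 3 = 0 \<or> s 2 4 = 0)"
  proof -
    let ?S = "{z \<in> {(1::nat,3::nat), (1,4), (2,3), (2,4)}. s (fst z) (snd z) \<noteq> 0}"
    have fin: "finite ?S" by simp
    have c1: "card ?S \<le> 1 \<longleftrightarrow> (\<forall>a\<in>?S. \<forall>b\<in>?S. a = b)"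
      using card_le_Suc0_iff_eq[OF fin] by simp
    have e: "\<And>A P f. (\<forall>x\<in>{x\<in>A. P x}. f x) \<longleftrightarrow> (\<forall>x\<in>A. P x \<longrightarrow> f x)" by auto
    have c2: "(\<forall>a\<in>?S. \<forall>b\<in>?S. a = b) \<longleftrightarrow> (s 1 3 = 0 \<or> s 1 4 = 0) \<and> (s 1 3 = 0 \<or> s 2 3 = 0) \<and> (s 1 3 = 0 \<or> s 2 4 = 0) \<and>
     (s 1 4 = 0 \<or> s 2 3 = 0) \<and> (s 1 4 = 0 \<or> s 2 4 = 0) \<and> (s 2 3 = 0 \<or> s 2 4 = 0)"
      unfolding e ball_simps by auto
    show ?thesis using c1 c2 by (rule trans)
  qed
  show ?thesis (is "?L \<longleftrightarrow> ?R")
  proof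
    assume L: ?L
    have m0: "(0::real) \<in> {-pi<..pi}" using pi_gt_zero by auto
    have const: "pfun s \<epsilon> x y = pfun s \<epsilon> 0 0 \<and> qfun s \<epsilon> x y = qfun s \<epsilon> 0 0"
      if "x \<in> {-pi<..pi}" "y \<in> {-pi<..pi}" for x y
      using quad_inj[OF L[rule_format, OF conjI[OF that(1) conjI[OF that(2) conjI[OF m0 m0]]], unfolded quad_poly_def]]
      by simp
    have "complex_of_real \<epsilon> * s 1 2 = 0 \<and> complex_of_real \<epsilon> * s 3 4 = 0 \<and> (0::complex) = 0 \<and> (0::complex) = 0"
    proof (rule fourier)
      fix x y :: real assume xy: "x \<in> {-pi<..pi}" "y \<in> {-pi<..pi}"
      have "pfun s \<epsilon> x y = pfun s \<epsilon> 0 0" using const[OF xy] by simp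
      hence "Re (of_real \<epsilon> * s 1 2 * E x) + Re (of_real \<epsilon> * s 3 4 * E y)
     + Re (0 * E (x+y)) + Re (0 * E (x - y)) = Re (of_real \<epsilon> * s 1 2 * E 0) + Re (of_real \<epsilon> * s 3 4 * E 0)
     + Re (0 * E (0+0)) + Re (0 * E (0 - 0))" unfolding pf by linarith
      thus "Re (of_real \<epsilon> * s 1 2 * exp (\<i> * of_real x)) + Re (of_real \<epsilon> * s 3 4 * exp (\<i> * of_real y))
     + Re (0 * exp (\<i> * of_real (x+y))) + Re (0 * exp (\<i> * of_real (x-y))) = Re (of_real \<epsilon> * s 1 2) + Re (of_real \<epsilon> * s 3 4) + Re 0 + Re 0"
        unfolding E_def by simp
    qed
    hence s12: "s 1 2 = 0" and s34: "s 3 4 = 0" using eps0 by auto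
    have "complex_of_real \<epsilon> * A = 0 \<and> complex_of_real \<epsilon> * B = 0 \<and> C = 0 \<and> D = 0"
    proof (rule fourier)
      fix x y :: real assume xy: "x \<in> {-pi<..pi}" "y \<in> {-pi<..pi}"
      have "qfun s \<epsilon> x y = qfun s \<epsilon> 0 0" using const[OF xy] by simp
      hence "Re (of_real \<epsilon> * A * E x) + Re (of_real \<epsilon> * B * E y)
     + Re (C * E (x+y)) + Re (D * E (x - y)) = Re (of_real \<epsilon> * A * E 0) + Re (of_real \<epsilon> * B * E 0)
     + Re (C * E (0+0)) + Re (D * E (0 - 0))" unfolding qf[OF s12 s34] by (rule cancel2)
      thus "Re (of_real \<epsilon> * A * exp (\<i> * of_real x)) + Re (of_real \<epsilon> * B * exp (\<i> * of_real y))
     + Re (C * exp (\<i> * of_real (x+y))) + Re (D * exp (\<i> * of_real (x-y))) = Re (of_real \<epsilon> * A) + Re (of_real \<epsilon> * B) + Re C + Re D"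
        unfolding E_def by simp
    qed
    hence "A = 0" "B = 0" "C = 0" "D = 0" using eps0 by auto
    hence "(s 1 3 = 0 \<or> s 1 4 = 0) \<and> (s 1 3 = 0 \<or> s 2 3 = 0) \<and> (s 1 3 = 0 \<or> s 2 4 = 0) \<and>
     (s 1 4 = 0 \<or> s 2 3 = 0) \<and> (s 1 4 = 0 \<or> s 2 4 = 0) \<and> (s 2 3 = 0 \<or> s 2 4 = 0)"
      unfolding A_def B_def C_def D_def by auto
    thus ?R using s12 s34 card_iff by simp
  next
    assume R: ?R
    hence s12: "s 1 2 = 0" and s34: "s 3 4 = 0" by auto
    have "A = 0" "B = 0" "C = 0" "D = 0" using R card_iff unfolding A_def B_def C_def D_def by auto
    hence "pfun s \<epsilon> x y = -(1/2) * R \<and> qfun s \<epsilon> x y = K" for x y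
      using pf[of x y] qf[OF s12 s34, of x y] s12 s34 by simp
    thus ?L unfolding quad_poly_def by simp
  qed
qed

end
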